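(* Let $a$ and $b$ be coprime positive integers, and put $N = a\left\lfloor \frac{b}{2}\right\rfloor + b\left\lfloor \frac{a}{2}\right\rfloor$. Let $R(a,b)$ be the set of integers $n$ with $0 \le n \le N$ such that $n = ax+by$ for some nonnegative integers $x,y$, and let $\mathrm{NR}(a,b)$ be the set of nonnegative integers that cannot be written as $ax+by$ with $x,y$ nonnegative integers. Then \[ R(a,b) = \left\{ai+bj : 0 \le i \le \Big\lfloor \frac{b}{2}\Big\rfloor,\ 0 \le j \le \Big\lfloor \frac{a}{2}\Big\rfloor \right\} \cup \left\{ N - |ai-bj| : 1 \le i \le \Big\lfloor \frac{b}{2}\Big\rfloor,\ 1 \le j \le \Big\lfloor \frac{a}{2}\Big\rfloor \right\}, \] and \[ \mathrm{NR}(a,b) = \{0,1,2,\dots,N\} \setminus R(a,b). \]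
   Context: A nonnegative integer is called representable (with respect to $a,b$) if it equals $ax+by$ for some nonnegative integers $x$ and $y$, and nonrepresentable otherwise. $\lfloor \cdot \rfloor$ denotes the floor function. *)

theory Defs
  imports Complex_Main
begin

definition representable :: "int \<Rightarrow> int \<Rightarrow> int \<Rightarrow> bool" where
  "representable a b n \<longleftrightarrow> (\<exists>x y. x \<ge> 0 \<and> y \<ge> 0 \<and> n = a * x + b * y)"

definition Rset :: "int \<Rightarrow> int \<Rightarrow> int set" where
  "Rset a b = {n. 0 \<le> n \<and> n \<le> a * \<lfloor>real_of_int b / 2\<rfloor> + b * \<lfloor>real_of_int a / 2\<rfloor> \<and> representable a b n}"

definition NRset :: "int \<Rightarrow> int \<Rightarrow> int set" where
  "NRset a b = {n. 0 \<le> n \<and> \<not> representable a b n}"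

end

theory Submission
  imports Defs
begin

lemma fl2: "\<lfloor>real_of_int b / 2\<rfloor> = b div 2"
proof -
  have "\<lfloor>real_of_int b / 2\<rfloor> = \<lfloor>real_of_int b / real_of_int 2\<rfloor>" by simp
  also have "\<dots> = b div 2" by (rule floor_divide_of_int_eq)
  finally show ?thesis .
qed

lemma frob:
  fixes a b n :: int
  assumes "a > 0" "b > 0" "coprime a b" "n > a*b - a - b"
  shows "representable a b n"
proof -
  obtain u v where uv: "u * a + v * b = 1"
    using bezout_int[of a b] assms(3) by auto
  define x where "x = (n*u) mod b"
  have x0: "0 \<le> x" and xb: "x \<le> b - 1" using assms(2) unfolding x_def by auto
  have "a * x mod b = (a * (n*u)) mod b" unfolding x_def by (simp add: mod_mult_right_eq)
  also have "a*(n*u) = n * (1 - v*b)"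
  proof -
    have "n*(u*a+v*b) = n" using uv by simp
    thus ?thesis by (simp add: algebra_simps)
  qed
  also have "n * (1 - v*b) = n + (-(n*v))*b" by (simp add: algebra_simps)
  also have "(n + (-(n*v))*b) mod b = n mod b" by (rule mod_mult_self1)
  finally have "b dvd (n - a*x)" by (metis mod_eq_dvd_iff dvd_diff_commute)
  then obtain y where y: "n - a*x = b*y" by auto
  have "a*x \<le> a*(b-1)" using xb assms(1) by simp
  hence "b*y > -b" using y assms(4) by (simp add: algebra_simps)
  hence "y > -1" using assms(2)
    by (metis mult.commute mult_minus1 mult_less_cancel_left_pos)
  hence "y \<ge> 0" by simp
  thus ?thesis unfolding representable_def using x0 y by (intro exI[of _ x] exI[of _ y]) auto
qed

theorem theorem4:
  fixes a b :: int
  assumes "a > 0" and "b > 0" and "coprime a b"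
  defines "N \<equiv> a * \<lfloor>real_of_int b / 2\<rfloor> + b * \<lfloor>real_of_int a / 2\<rfloor>"
  shows "(Rset a b =
           {a * i + b * j | i j. 0 \<le> i \<and> i \<le> \<lfloor>real_of_int b / 2\<rfloor> \<and> 0 \<le> j \<and> j \<le> \<lfloor>real_of_int a / 2\<rfloor>}
         \<union> {N - \<bar>a * i - b * j\<bar> | i j. 1 \<le> i \<and> i \<le> \<lfloor>real_of_int b / 2\<rfloor> \<and> 1 \<le> j \<and> j \<le> \<lfloor>real_of_int a / 2\<rfloor>})
         \<and> NRset a b = {0..N} - Rset a b"
proof -
  define A where "A = a div 2"
  define B where "B = b div 2"
  have N: "N = a*B + b*A" unfolding N_def A_def B_def fl2 by simp
  have A2: "2*A \<le> a" "2*A \<ge> a - 1" unfolding A_def by auto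
  have B2: "2*B \<le> b" "2*B \<ge> b - 1" unfolding B_def by auto
  have A0: "A \<ge> 0" "B \<ge> 0" unfolding A_def B_def using assms by auto
  have R: "Rset a b = {n. 0 \<le> n \<and> n \<le> N \<and> representable a b n}"
    unfolding Rset_def N_def by simp
  let ?S1 = "{a * i + b * j | i j. 0 \<le> i \<and> i \<le> B \<and> 0 \<le> j \<and> j \<le> A}"
  let ?S2 = "{N - \<bar>a * i - b * j\<bar> | i j. 1 \<le> i \<and> i \<le> B \<and> 1 \<le> j \<and> j \<le> A}"
  have "Rset a b = ?S1 \<union> ?S2"
  proof
    show "Rset a b \<subseteq> ?S1 \<union> ?S2"
    proof
      fix n assume "n \<in> Rset a b"
      then obtain x y where xy: "x \<ge> 0" "y \<ge> 0" "n = a*x + b*y" "n \<le> N"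
        unfolding R representable_def by auto
      show "n \<in> ?S1 \<union> ?S2"
      proof (cases "x \<le> B \<and> y \<le> A")
        case True then show ?thesis using xy by blast
      next
        case False
        show ?thesis
        proof (cases "x > B")
          case True
          define i where "i = x - B"
          define j where "j = A - y"
          have e: "a*i \<le> b*j" using xy N unfolding i_def j_def by (simp add: algebra_simps)
          have i1: "i \<ge> 1" using True i_def by simp
          have "a*i > 0" using i1 assms by simp
          hence "b*j > 0" using e by simp
          hence j1: "j \<ge> 1" using assms(2) by (simp add: zero_less_mult_iff)
          have "b*j \<le> b*A" using xy j_def assms by simp
          moreover have "b*(2*A) \<le> b*a" using A2 assms(2) by simp
          ultimately have "2*(a*i) \<le> a*b" using e by (simp add: algebra_simps)
          hence "a*(2*i) \<le> a*b" by (simp add: algebra_simps)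
          hence "2*i \<le> b" using assms(1) by simp
          hence iB: "i \<le> B" unfolding B_def by linarith
          have "n = N - \<bar>a*i - b*j\<bar>" using e xy N unfolding i_def j_def by (simp add: algebra_simps)
          moreover have "j \<le> A" using j_def xy by simp
          ultimately show ?thesis using i1 j1 iB by blast
        next
          case False2: False
          hence yA: "y > A" using False by auto
          define j where "j = y - A"
          define i where "i = B - x"
          have e: "b*j \<le> a*i" using xy N unfolding i_def j_def by (simp add: algebra_simps)
          have j1: "j \<ge> 1" using yA j_def by simp
          have "b*j > 0" using j1 assms by simp
          hence "a*i > 0" using e by simp
          hence i1: "i \<ge> 1" using assms(1) by (simp add: zero_less_mult_iff)
          have "a*i \<le> a*B" using xy i_def assms by simp
          moreover have "a*(2*B) \<le> a*b" using B2 assms(1) by simp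
          ultimately have "2*(b*j) \<le> a*b" using e by (simp add: algebra_simps)
          hence "b*(2*j) \<le> b*a" by (simp add: algebra_simps)
          hence "2*j \<le> a" using assms(2) by simp
          hence jA: "j \<le> A" unfolding A_def by linarith
          have "n = N - \<bar>a*i - b*j\<bar>" using e xy N unfolding i_def j_def by (simp add: algebra_simps)
          moreover have "i \<le> B" using i_def xy by simp
          ultimately show ?thesis using i1 j1 jA by blast
        qed
      qed
    qed
  next
    show "?S1 \<union> ?S2 \<subseteq> Rset a b"
    proof
      fix n assume "n \<in> ?S1 \<union> ?S2"
      then show "n \<in> Rset a b"
      proof
        assume "n \<in> ?S1"
        then obtain i j where ij: "n = a*i+b*j" "0 \<le> i" "i \<le> B" "0 \<le> j" "j \<le> A" by blast
        have "a*i \<le> a*B" "b*j \<le> b*A" using ij assms by auto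
        hence "n \<le> N" using ij N by linarith
        moreover have "n \<ge> 0" using ij assms by simp
        ultimately show ?thesis unfolding R representable_def using ij by blast
      next
        assume "n \<in> ?S2"
        then obtain i j where ij: "n = N - \<bar>a*i-b*j\<bar>" "1 \<le> i" "i \<le> B" "1 \<le> j" "j \<le> A" by blast
        show ?thesis
        proof (cases "a*i \<ge> b*j")
          case True
          have n: "n = a*(B-i) + b*(A+j)" using ij True N by (simp add: algebra_simps)
          have "0 \<le> a*(B-i)" "0 \<le> b*(A+j)" using ij assms A0 by auto
          moreover have "n \<le> N" using ij by simp
          moreover have "B-i \<ge> 0" "A+j \<ge> 0" using ij A0 by auto
          ultimately have "representable a b n" "0 \<le> n" "n \<le> N"
            unfolding representable_def using n by (blast, linarith, linarith)
          thus ?thesis unfolding R by blast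
        next
          case False
          have n: "n = a*(B+i) + b*(A-j)" using ij False N by (simp add: algebra_simps)
          have "0 \<le> a*(B+i)" "0 \<le> b*(A-j)" using ij assms A0 by auto
          moreover have "n \<le> N" using ij by simp
          moreover have "B+i \<ge> 0" "A-j \<ge> 0" using ij A0 by auto
          ultimately have "representable a b n" "0 \<le> n" "n \<le> N"
            unfolding representable_def using n by (blast, linarith, linarith)
          thus ?thesis unfolding R by blast
        qed
      qed
    qed
  qed
  moreover have "NRset a b = {0..N} - Rset a b"
  proof -
    have "n \<le> N" if "n \<ge> 0" "\<not> representable a b n" for n
    proof (rule ccontr)
      assume "\<not> n \<le> N"
      hence "2*n \<ge> 2*N + 2" by simp
      moreover have "2*N \<ge> a*(b-1) + b*(a-1)"
      proof -
        have "a*(b-1) \<le> a*(2*B)" using B2 assms by simp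
        moreover have "b*(a-1) \<le> b*(2*A)" using A2 assms by simp
        ultimately show ?thesis using N by (simp add: algebra_simps)
      qed
      ultimately have "n > a*b - a - b" using assms(1,2) by (simp add: algebra_simps)
      thus False using frob assms that by blast
    qed
    thus ?thesis unfolding NRset_def R by auto
  qed
  ultimately show ?thesis unfolding N_def fl2 A_def B_def by simp
qed

end
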